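(* Let $(G,\sigma)$ and $(H,\tau)$ be signed graphs. Then the circular chromatic number of their Type 1 Cartesian product satisfies $$\chi_c\big((G,\sigma)\square(H,\tau)\big)=\max\{\chi_c(G,\sigma),\chi_c(H,\tau)\}.$$
   Context: A signed graph $(G,\sigma)$ is a finite graph $G$ (multiple edges allowed, no loops) together with a signature $\sigma:E(G)\to\{+1,-1\}$; edges with sign $+1$ are positive, those with sign $-1$ negative. For a real $r\ge 2$, $C^r$ is the circle of circumference $r$ (the interval $[0,r]$ with endpoints identified), $d_{C^r}(x,y)=\min\{|x-y|,\,r-|x-y|\}$, and $\overline{x}=x+r/2 \pmod r$ is the antipodal point of $x$. A circular $r$-coloring of $(G,\sigma)$ is a map $f:V(G)\to C^r$ with $d_{C^r}(f(u),f(v))\ge 1$ for every positive edge $uv$ and $d_{C^r}(f(u),\overline{f(v)})\ge 1$ for every negative edge $uv$. The circular chromatic number $\chi_c(G,\sigma)$ is the infimum of all $r\ge 2$ such that $(G,\sigma)$ has a circular $r$-coloring (assumed finite). The Type 1 Cartesian product $(G,\sigma)\square(H,\tau)$ is the signed graph with vertex set $V(G)\times V(H)$, where $(u,x)(v,y)$ is an edge iff either $u=v$ and $xy\in E(H)$, or $x=y$ and $uv\in E(G)$; its signature $\sigma\square\tau$ gives $(u,x)(v,x)$ the sign $\sigma(uv)$ and $(u,x)(u,y)$ the sign $\tau(xy)$. *)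

theory Defs
  imports Complex_Main
begin

text \<open>A signed multigraph: finite nonempty vertex set, finite edge set (edge identifiers),
  each edge has two distinct endpoints (no loops, parallel edges allowed) and a sign in {1,-1}.\<close>

record ('v, 'e) sgraph =
  verts :: "'v set"
  edges :: "'e set"
  ends  :: "'e \<Rightarrow> 'v \<times> 'v"
  sgn   :: "'e \<Rightarrow> int"

definition signed_graph :: "('v, 'e) sgraph \<Rightarrow> bool" where
  "signed_graph G \<longleftrightarrow>
     finite (verts G) \<and> verts G \<noteq> {} \<and> finite (edges G) \<and>
     (\<forall>e\<in>edges G. fst (ends G e) \<in> verts G \<and> snd (ends G e) \<in> verts G
                   \<and> fst (ends G e) \<noteq> snd (ends G e) \<and> sgn G e \<in> {1, -1})"

text \<open>The circle C^r is represented by the interval [0,r).\<close>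

definition circ_dist :: "real \<Rightarrow> real \<Rightarrow> real \<Rightarrow> real" where
  "circ_dist r x y = min \<bar>x - y\<bar> (r - \<bar>x - y\<bar>)"

definition antipode :: "real \<Rightarrow> real \<Rightarrow> real" where
  "antipode r x = (if x + r / 2 < r then x + r / 2 else x + r / 2 - r)"

definition circular_coloring :: "('v, 'e) sgraph \<Rightarrow> real \<Rightarrow> ('v \<Rightarrow> real) \<Rightarrow> bool" where
  "circular_coloring G r f \<longleftrightarrow>
     (\<forall>v\<in>verts G. 0 \<le> f v \<and> f v < r) \<and>
     (\<forall>e\<in>edges G.
        (sgn G e = 1 \<longrightarrow> circ_dist r (f (fst (ends G e))) (f (snd (ends G e))) \<ge> 1) \<and>
        (sgn G e = -1 \<longrightarrow> circ_dist r (f (fst (ends G e))) (antipode r (f (snd (ends G e)))) \<ge> 1))"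

definition circ_chrom :: "('v, 'e) sgraph \<Rightarrow> real" where
  "circ_chrom G = Inf {r. r \<ge> 2 \<and> (\<exists>f. circular_coloring G r f)}"

definition cart_prod :: "('v, 'e) sgraph \<Rightarrow> ('w, 'f) sgraph \<Rightarrow> ('v \<times> 'w, ('e \<times> 'w) + ('v \<times> 'f)) sgraph" where
  "cart_prod G H =
     \<lparr> verts = verts G \<times> verts H,
       edges = Inl ` (edges G \<times> verts H) \<union> Inr ` (verts G \<times> edges H),
       ends = case_sum (\<lambda>(e, x). ((fst (ends G e), x), (snd (ends G e), x)))
                       (\<lambda>(u, f). ((u, fst (ends H f)), (u, snd (ends H f)))),
       sgn = case_sum (\<lambda>(e, x). sgn G e) (\<lambda>(u, f). sgn H f) \<rparr>"

end

theory Submission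
  imports Defs
begin

definition md :: "real \<Rightarrow> real \<Rightarrow> real" where
  "md r d = d - r * of_int \<lfloor>d / r\<rfloor>"

definition phi :: "real \<Rightarrow> real \<Rightarrow> real" where
  "phi r d = min (md r d) (r - md r d)"

lemma md_shift: assumes "r > 0" shows "md r (d + r * of_int k) = md r d"
proof -
  have "(d + r * of_int k) / r = d / r + of_int k" using assms by (simp add: field_simps)
  then have "\<lfloor>(d + r * of_int k) / r\<rfloor> = \<lfloor>d / r\<rfloor> + k" by simp
  then show ?thesis unfolding md_def by (simp add: algebra_simps)
qed

lemma md_id: assumes "0 \<le> d" "d < r" shows "md r d = d"
proof -
  have "\<lfloor>d / r\<rfloor> = 0" using assms by (simp add: floor_eq_iff)
  then show ?thesis unfolding md_def by simp
qed

lemma md_range: assumes "r > 0" shows "0 \<le> md r d" "md r d < r"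
proof -
  have a: "of_int \<lfloor>d / r\<rfloor> \<le> d / r" "d / r < of_int \<lfloor>d / r\<rfloor> + 1" by linarith+
  have "r * of_int \<lfloor>d / r\<rfloor> \<le> r * (d / r)" using a(1) assms by (intro mult_left_mono) auto
  then show "0 \<le> md r d" unfolding md_def using assms by simp
  have "r * (d / r) < r * (of_int \<lfloor>d / r\<rfloor> + 1)" using a(2) assms by (intro mult_strict_left_mono) auto
  then show "md r d < r" unfolding md_def using assms by (simp add: algebra_simps)
qed

lemma md_eq_shift: assumes "r > 0" shows "md r d = d + r * of_int (- \<lfloor>d / r\<rfloor>)"
  unfolding md_def by simp

lemma phi_cong: assumes "r > 0" "a - b = r * of_int k" shows "phi r a = phi r b"
proof -
  have "a = b + r * of_int k" using assms by simp
  then show ?thesis unfolding phi_def using md_shift[OF assms(1)] by simp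
qed

lemma circ_dist_phi: assumes "0 \<le> x" "x < r" "0 \<le> y" "y < r"
  shows "circ_dist r x y = phi r (x - y)"
proof (cases "x - y \<ge> 0")
  case True
  then have "md r (x - y) = x - y" using assms by (intro md_id) auto
  then show ?thesis unfolding circ_dist_def phi_def using True by simp
next
  case False
  have r: "r > 0" using assms by simp
  have "md r (x - y) = md r (x - y + r * of_int 1)" using md_shift[OF r, of "x-y" 1] by simp
  also have "\<dots> = x - y + r" using assms False md_id[of "x - y + r" r] by simp
  finally show ?thesis unfolding circ_dist_def phi_def using False by (simp add: min.commute)
qed

lemma antipode_md: assumes "0 \<le> y" "y < r" shows "antipode r y = md r (y + r / 2)"
proof (cases "y + r / 2 < r")
  case True then show ?thesis unfolding antipode_def using assms md_id[of "y + r/2" r] by simp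
next
  case False
  have r: "r > 0" using assms by simp
  have "md r (y + r/2) = md r (y + r/2 - r + r * of_int 1)" by (simp add: algebra_simps)
  also have "\<dots> = md r (y + r/2 - r)" by (rule md_shift[OF r])
  also have "\<dots> = y + r/2 - r" using assms False by (intro md_id) auto
  finally show ?thesis unfolding antipode_def using False by simp
qed

lemma antipode_range: assumes "0 \<le> y" "y < r" shows "0 \<le> antipode r y" "antipode r y < r"
  using assms unfolding antipode_def by auto

definition CS :: "('v, 'e) sgraph \<Rightarrow> real set" where
  "CS G = {r. r \<ge> 2 \<and> (\<exists>f. circular_coloring G r f)}"

lemma scale_dist: assumes "t > 0" shows "circ_dist (t * r) (t * x) (t * y) = t * circ_dist r x y"
proof -
  have "\<bar>t * x - t * y\<bar> = t * \<bar>x - y\<bar>" using assms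
    by (metis abs_mult abs_of_pos right_diff_distrib)
  then show ?thesis unfolding circ_dist_def using assms
    by (simp add: min_mult_distrib_left right_diff_distrib)
qed

lemma scale_antipode: assumes "t > 0" shows "antipode (t * r) (t * y) = t * antipode r y"
proof -
  have "(t * y + t * r / 2 < t * r) = (y + r / 2 < r)" using assms
    by (metis (no_types, opaque_lifting) distrib_left mult_less_cancel_left_pos times_divide_eq_right)
  then show ?thesis unfolding antipode_def using assms by (simp add: algebra_simps)
qed

lemma CS_mono: assumes "r \<in> CS G" "r \<le> r'" shows "r' \<in> CS G"
proof -
  obtain f where f: "circular_coloring G r f" and r: "r \<ge> 2" using assms unfolding CS_def by auto
  define t where "t = r' / r"
  have t: "t \<ge> 1" "t > 0" using assms r unfolding t_def by auto
  have r': "r' = t * r" using r unfolding t_def by simp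
  have "circular_coloring G r' (\<lambda>v. t * f v)"
    unfolding circular_coloring_def r'
  proof (intro conjI ballI impI)
    fix v assume "v \<in> verts G"
    then have "0 \<le> f v" "f v < r" using f unfolding circular_coloring_def by auto
    then show "0 \<le> t * f v" "t * f v < t * r" using t by auto
  next
    fix e assume e: "e \<in> edges G" "sgn G e = 1"
    then have "circ_dist r (f (fst (ends G e))) (f (snd (ends G e))) \<ge> 1"
      using f unfolding circular_coloring_def by auto
    then have "t * circ_dist r (f (fst (ends G e))) (f (snd (ends G e))) \<ge> 1"
      using t by (metis dual_order.trans less_eq_real_def mult_left_mono mult.right_neutral)
    then show "1 \<le> circ_dist (t * r) (t * f (fst (ends G e))) (t * f (snd (ends G e)))"
      by (simp add: scale_dist t)
  next
    fix e assume e: "e \<in> edges G" "sgn G e = -1"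
    then have "circ_dist r (f (fst (ends G e))) (antipode r (f (snd (ends G e)))) \<ge> 1"
      using f unfolding circular_coloring_def by auto
    then have "t * circ_dist r (f (fst (ends G e))) (antipode r (f (snd (ends G e)))) \<ge> 1"
      using t by (metis dual_order.trans less_eq_real_def mult_left_mono mult.right_neutral)
    then show "1 \<le> circ_dist (t * r) (t * f (fst (ends G e))) (antipode (t * r) (t * f (snd (ends G e))))"
      by (simp add: scale_dist scale_antipode t)
  qed
  moreover have "2 \<le> r'" using r assms(2) by simp
  ultimately show ?thesis unfolding CS_def by auto
qed


lemma CS_bdd: "bdd_below (CS G)"
  unfolding CS_def by (rule bdd_belowI[of _ 2]) auto

lemma CS_nonempty: assumes "signed_graph G" shows "CS G \<noteq> {}"
proof -
  have fin: "finite (verts G)" and ne: "verts G \<noteq> {}" using assms unfolding signed_graph_def by auto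
  obtain h where h: "bij_betw h (verts G) {0..<card (verts G)}" using ex_bij_betw_finite_nat[OF fin] by blast
  define n where "n = card (verts G)"
  have n: "n \<ge> 1" using fin ne unfolding n_def by (simp add: Suc_leI card_gt_0_iff)
  define r where "r = 4 * real n"
  define f where "f = (\<lambda>v. real (h v))"
  have hr: "\<And>v. v \<in> verts G \<Longrightarrow> h v < n" using h unfolding n_def bij_betw_def by auto
  have "circular_coloring G r f" unfolding circular_coloring_def
  proof (intro conjI ballI impI)
    fix v assume "v \<in> verts G" then show "0 \<le> f v" "f v < r" using hr[of v] unfolding f_def r_def by auto
  next
    fix e assume e: "e \<in> edges G" "sgn G e = 1"
    let ?u = "fst (ends G e)" and ?v = "snd (ends G e)"
    have uv: "?u \<in> verts G" "?v \<in> verts G" "?u \<noteq> ?v" using e assms unfolding signed_graph_def by auto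
    then have "h ?u \<noteq> h ?v" using h unfolding bij_betw_def inj_on_def by metis
    then have "\<bar>f ?u - f ?v\<bar> \<ge> 1" unfolding f_def by linarith
    moreover have "\<bar>f ?u - f ?v\<bar> < n" using hr[OF uv(1)] hr[OF uv(2)] unfolding f_def by linarith
    ultimately show "1 \<le> circ_dist r (f ?u) (f ?v)" unfolding circ_dist_def r_def using n by simp
  next
    fix e assume e: "e \<in> edges G" "sgn G e = -1"
    let ?u = "fst (ends G e)" and ?v = "snd (ends G e)"
    have uv: "?u \<in> verts G" "?v \<in> verts G" using e assms unfolding signed_graph_def by auto
    have a: "antipode r (f ?v) = f ?v + 2 * real n" using hr[OF uv(2)] unfolding antipode_def r_def f_def by auto
    have n': "real n \<ge> 1" using n by simp
    have b: "f ?u < n" "f ?v < n" "f ?u \<ge> 0" "f ?v \<ge> 0" using hr[OF uv(1)] hr[OF uv(2)] unfolding f_def by auto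
    show "1 \<le> circ_dist r (f ?u) (antipode r (f ?v))" unfolding a circ_dist_def
      using b n' unfolding r_def by (smt (verit))
  qed
  moreover have "r \<ge> 2" using n unfolding r_def by simp
  ultimately show ?thesis unfolding CS_def by auto
qed

lemma restrict_G: assumes F: "circular_coloring (cart_prod G H) r F" and x0: "x0 \<in> verts H"
  shows "circular_coloring G r (\<lambda>u. F (u, x0))"
  unfolding circular_coloring_def
proof (intro conjI ballI impI)
  fix v assume "v \<in> verts G"
  then have "(v, x0) \<in> verts (cart_prod G H)" using x0 unfolding cart_prod_def by simp
  then show "0 \<le> F (v, x0)" "F (v, x0) < r" using F unfolding circular_coloring_def by auto
next
  fix e assume e: "e \<in> edges G"
  have ee: "Inl (e, x0) \<in> edges (cart_prod G H)" using e x0 unfolding cart_prod_def by auto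
  have en: "ends (cart_prod G H) (Inl (e, x0)) = ((fst (ends G e), x0), (snd (ends G e), x0))"
    "sgn (cart_prod G H) (Inl (e, x0)) = sgn G e" unfolding cart_prod_def by auto
  { assume "sgn G e = 1"
    then show "1 \<le> circ_dist r (F (fst (ends G e), x0)) (F (snd (ends G e), x0))"
      using F ee en unfolding circular_coloring_def by force }
  { assume "sgn G e = -1"
    then show "1 \<le> circ_dist r (F (fst (ends G e), x0)) (antipode r (F (snd (ends G e), x0)))"
      using F ee en unfolding circular_coloring_def by force }
qed

lemma restrict_H: assumes F: "circular_coloring (cart_prod G H) r F" and u0: "u0 \<in> verts G"
  shows "circular_coloring H r (\<lambda>x. F (u0, x))"
  unfolding circular_coloring_def
proof (intro conjI ballI impI)
  fix v assume "v \<in> verts H"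
  then have "(u0, v) \<in> verts (cart_prod G H)" using u0 unfolding cart_prod_def by simp
  then show "0 \<le> F (u0, v)" "F (u0, v) < r" using F unfolding circular_coloring_def by auto
next
  fix e assume e: "e \<in> edges H"
  have ee: "Inr (u0, e) \<in> edges (cart_prod G H)" using e u0 unfolding cart_prod_def by auto
  have en: "ends (cart_prod G H) (Inr (u0, e)) = ((u0, fst (ends H e)), (u0, snd (ends H e)))"
    "sgn (cart_prod G H) (Inr (u0, e)) = sgn H e" unfolding cart_prod_def by auto
  { assume "sgn H e = 1"
    then show "1 \<le> circ_dist r (F (u0, fst (ends H e))) (F (u0, snd (ends H e)))"
      using F ee en unfolding circular_coloring_def by force }
  { assume "sgn H e = -1"
    then show "1 \<le> circ_dist r (F (u0, fst (ends H e))) (antipode r (F (u0, snd (ends H e))))"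
      using F ee en unfolding circular_coloring_def by force }
qed


lemma key1: assumes "r > 0" shows "phi r (md r (a + c) - md r (b + c)) = phi r (a - b)"
  by (rule phi_cong[OF assms, where k = "\<lfloor>(b + c) / r\<rfloor> - \<lfloor>(a + c) / r\<rfloor>"])
     (simp add: md_def algebra_simps)

lemma key2: assumes "r > 0"
  shows "phi r (md r (a + c) - md r (md r (b + c) + r / 2)) = phi r (a - md r (b + r / 2))"
proof -
  have "phi r (md r (a + c) - md r (md r (b + c) + r / 2)) = phi r (a - (b + r / 2))"
    by (rule phi_cong[OF assms, where k = "\<lfloor>(md r (b + c) + r / 2) / r\<rfloor> + \<lfloor>(b + c) / r\<rfloor> - \<lfloor>(a + c) / r\<rfloor>"])
       (simp add: md_def algebra_simps)
  also have "\<dots> = phi r (a - md r (b + r / 2))"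
    by (rule phi_cong[OF assms, where k = "- \<lfloor>(b + r / 2) / r\<rfloor>"])
       (simp add: md_def algebra_simps)
  finally show ?thesis .
qed

lemma prod_col:
  assumes sG: "signed_graph G" and sH: "signed_graph H"
    and f: "circular_coloring G r f" and g: "circular_coloring H r g" and r: "r \<ge> 2"
  shows "circular_coloring (cart_prod G H) r (\<lambda>p. md r (f (fst p) + g (snd p)))"
  unfolding circular_coloring_def
proof (intro conjI ballI impI)
  have r0: "r > 0" using r by simp
  fix p assume "p \<in> verts (cart_prod G H)"
  show "0 \<le> md r (f (fst p) + g (snd p))" "md r (f (fst p) + g (snd p)) < r" using md_range[OF r0] by auto
next
  have r0: "r > 0" using r by simp
  have fr: "\<And>v. v \<in> verts G \<Longrightarrow> 0 \<le> f v \<and> f v < r" using f unfolding circular_coloring_def by auto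
  have gr: "\<And>v. v \<in> verts H \<Longrightarrow> 0 \<le> g v \<and> g v < r" using g unfolding circular_coloring_def by auto
  have mr: "\<And>d. 0 \<le> md r d \<and> md r d < r" using md_range[OF r0] by auto
  fix e assume e: "e \<in> edges (cart_prod G H)"
  let ?c = "\<lambda>p. md r (f (fst p) + g (snd p))"
  let ?P = "cart_prod G H"
  have "(sgn ?P e = 1 \<longrightarrow> 1 \<le> circ_dist r (?c (fst (ends ?P e))) (?c (snd (ends ?P e)))) \<and>
        (sgn ?P e = -1 \<longrightarrow> 1 \<le> circ_dist r (?c (fst (ends ?P e))) (antipode r (?c (snd (ends ?P e)))))"
  proof (cases e)
    case (Inl a)
    obtain d x where a: "a = (d, x)" by force
    have d: "d \<in> edges G" "x \<in> verts H" using e Inl a unfolding cart_prod_def by auto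
    let ?u = "fst (ends G d)" and ?v = "snd (ends G d)"
    have uv: "?u \<in> verts G" "?v \<in> verts G" using d sG unfolding signed_graph_def by auto
    have en: "ends ?P e = ((?u, x), (?v, x))" "sgn ?P e = sgn G d" unfolding cart_prod_def Inl a by auto
    have c1: "circ_dist r (?c (?u, x)) (?c (?v, x)) = circ_dist r (f ?u) (f ?v)"
      using circ_dist_phi mr fr[OF uv(1)] fr[OF uv(2)] key1[OF r0] by simp
    have c2: "circ_dist r (?c (?u, x)) (antipode r (?c (?v, x))) = circ_dist r (f ?u) (antipode r (f ?v))"
    proof -
      have "circ_dist r (?c (?u, x)) (antipode r (?c (?v, x))) =
            phi r (md r (f ?u + g x) - md r (md r (f ?v + g x) + r / 2))"
        using circ_dist_phi antipode_md mr by simp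
      also have "\<dots> = phi r (f ?u - md r (f ?v + r / 2))" by (rule key2[OF r0])
      also have "\<dots> = circ_dist r (f ?u) (antipode r (f ?v))"
        using circ_dist_phi antipode_md mr fr[OF uv(1)] fr[OF uv(2)] by simp
      finally show ?thesis .
    qed
    have "1 \<le> circ_dist r (f ?u) (f ?v)" if "sgn G d = 1" using f d(1) that unfolding circular_coloring_def by auto
    moreover have "1 \<le> circ_dist r (f ?u) (antipode r (f ?v))" if "sgn G d = -1" using f d(1) that unfolding circular_coloring_def by auto
    ultimately show ?thesis unfolding en using c1 c2 by simp
  next
    case (Inr a)
    obtain u d where a: "a = (u, d)" by force
    have d: "d \<in> edges H" "u \<in> verts G" using e Inr a unfolding cart_prod_def by auto
    let ?x = "fst (ends H d)" and ?y = "snd (ends H d)"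
    have xy: "?x \<in> verts H" "?y \<in> verts H" using d sH unfolding signed_graph_def by auto
    have en: "ends ?P e = ((u, ?x), (u, ?y))" "sgn ?P e = sgn H d" unfolding cart_prod_def Inr a by auto
    have c1: "circ_dist r (?c (u, ?x)) (?c (u, ?y)) = circ_dist r (g ?x) (g ?y)"
      using circ_dist_phi mr gr[OF xy(1)] gr[OF xy(2)] key1[OF r0, of "g ?x" "f u" "g ?y"]
      by (simp add: add.commute)
    have c2: "circ_dist r (?c (u, ?x)) (antipode r (?c (u, ?y))) = circ_dist r (g ?x) (antipode r (g ?y))"
    proof -
      have "circ_dist r (?c (u, ?x)) (antipode r (?c (u, ?y))) =
            phi r (md r (g ?x + f u) - md r (md r (g ?y + f u) + r / 2))"
        using circ_dist_phi antipode_md mr by (simp add: add.commute)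
      also have "\<dots> = phi r (g ?x - md r (g ?y + r / 2))" by (rule key2[OF r0])
      also have "\<dots> = circ_dist r (g ?x) (antipode r (g ?y))"
        using circ_dist_phi antipode_md mr gr[OF xy(1)] gr[OF xy(2)] by simp
      finally show ?thesis .
    qed
    have "1 \<le> circ_dist r (g ?x) (g ?y)" if "sgn H d = 1" using g d(1) that unfolding circular_coloring_def by auto
    moreover have "1 \<le> circ_dist r (g ?x) (antipode r (g ?y))" if "sgn H d = -1" using g d(1) that unfolding circular_coloring_def by auto
    ultimately show ?thesis unfolding en using c1 c2 by simp
  qed
  then show "sgn ?P e = 1 \<Longrightarrow> 1 \<le> circ_dist r (?c (fst (ends ?P e))) (?c (snd (ends ?P e)))"
    and "sgn ?P e = -1 \<Longrightarrow> 1 \<le> circ_dist r (?c (fst (ends ?P e))) (antipode r (?c (snd (ends ?P e))))"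
    by auto
qed


lemma prod_CS: assumes "signed_graph G" "signed_graph H" "r \<in> CS G" "r \<in> CS H"
  shows "r \<in> CS (cart_prod G H)"
proof -
  obtain f g where "circular_coloring G r f" "circular_coloring H r g" "r \<ge> 2"
    using assms unfolding CS_def by auto
  then show ?thesis using prod_col[OF assms(1,2)] unfolding CS_def by blast
qed

theorem theorem1:
  fixes G :: "('v, 'e) sgraph" and H :: "('w, 'f) sgraph"
  assumes "signed_graph G" and "signed_graph H"
  shows "circ_chrom (cart_prod G H) = max (circ_chrom G) (circ_chrom H)"
proof -
  have cc: "\<And>X :: ('v \<times> 'w, ('e \<times> 'w) + ('v \<times> 'f)) sgraph. circ_chrom X = Inf (CS X)"
    "circ_chrom G = Inf (CS G)" "circ_chrom H = Inf (CS H)"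
    unfolding circ_chrom_def CS_def by auto
  let ?P = "cart_prod G H"
  have neG: "CS G \<noteq> {}" and neH: "CS H \<noteq> {}" using CS_nonempty assms by auto
  obtain a b where a: "a \<in> CS G" and b: "b \<in> CS H" using neG neH by blast
  have "max a b \<in> CS ?P" using prod_CS[OF assms] CS_mono a b by (metis max.cobounded1 max.cobounded2)
  then have neP: "CS ?P \<noteq> {}" by blast
  obtain x0 where x0: "x0 \<in> verts H" using assms(2) unfolding signed_graph_def by auto
  obtain u0 where u0: "u0 \<in> verts G" using assms(1) unfolding signed_graph_def by auto
  have sub1: "CS ?P \<subseteq> CS G" unfolding CS_def using restrict_G[OF _ x0] by blast
  have sub2: "CS ?P \<subseteq> CS H" unfolding CS_def using restrict_H[OF _ u0] by blast
  have ge: "max (Inf (CS G)) (Inf (CS H)) \<le> Inf (CS ?P)"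
    using cInf_superset_mono[OF neP CS_bdd sub1] cInf_superset_mono[OF neP CS_bdd sub2] by simp
  have le: "Inf (CS ?P) \<le> max (Inf (CS G)) (Inf (CS H))"
  proof (rule dense_ge)
    fix y assume y: "max (Inf (CS G)) (Inf (CS H)) < y"
    then have "Inf (CS G) < y" "Inf (CS H) < y" by auto
    then obtain r1 r2 where r1: "r1 \<in> CS G" "r1 < y" and r2: "r2 \<in> CS H" "r2 < y"
      using cInf_less_iff[OF neG CS_bdd] cInf_less_iff[OF neH CS_bdd] by blast
    have "y \<in> CS G" "y \<in> CS H" using CS_mono r1 r2 by (auto intro: less_imp_le)
    then have "y \<in> CS ?P" using prod_CS[OF assms] by blast
    then show "Inf (CS ?P) \<le> y" using cInf_lower[OF _ CS_bdd] by blast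
  qed
  show ?thesis unfolding cc using ge le by (simp add: max_def)
qed

end
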